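(* Let $n\in\{2,3,4,\dots\}$, and let $\lambda$ be such that the integrals below converge absolutely. Then $$S_n(\lambda,0,0)=\frac{1}{\bigl(n-1+2\lambda\phi(-in)\bigr)\bigl(n+2\lambda\phi(-in)\bigr)}\int_{0<t_2<\cdots<t_{n-1}<1}\prod_{1\le i<j\le n}|t_i-t_j|^{2\lambda d(j-i)}\Big|_{t_1=0,\ t_n=1}\,dt_2\cdots dt_{n-1}=\frac{S_{n-2}(\lambda,2\lambda,2\lambda)}{\bigl(n-1+2\lambda\phi(-in)\bigr)\bigl(n+2\lambda\phi(-in)\bigr)},$$ with the convention $S_0=1$.
   Context: Let $\sigma^2\ge0$ and let $\mathcal M$ be non-decreasing and continuous on $(-\infty,0)$ and $(0,\infty)$, with $\int_{[-1,1]\setminus\{0\}}u^2d\mathcal M(u)<\infty$, $\lim_{u\to\pm\infty}\mathcal M(u)=0$, decaying fast enough that the integrals below converge. For $m\in\mathbb N$ let $d(m)=\sigma^2+\int_{\mathbb R\setminus\{0\}}e^{(m-1)u}(e^u-1)^2\,d\mathcal M(u)$, and for $n\in\mathbb N$ let $$\phi(-in)=\frac{\sigma^2}{2}(n^2-n)+\int_{\mathbb R\setminus\{0\}}\bigl(e^{nu}-1-n(e^u-1)\bigr)\,d\mathcal M(u).$$ Define the generalized Selberg integral $$S_n(\lambda,\lambda_1,\lambda_2)=\int_{0<t_1<\cdots<t_n<1}\prod_{i=1}^n t_i^{\lambda_1 d(i)}(1-t_i)^{\lambda_2 d(n-i+1)}\prod_{1\le k<p\le n}|t_p-t_k|^{2\lambda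 d(p-k)}\,dt .$$ *)

theory Defs
  imports "HOL-Analysis.Analysis"
begin

text \<open>The Levy-type quantities.  The measure \<mu> plays the role of dM on R minus 0.\<close>

definition dd :: "real \<Rightarrow> real measure \<Rightarrow> nat \<Rightarrow> real" where
  "dd \<sigma>2 \<mu> m = \<sigma>2 + set_lebesgue_integral \<mu> (- {0})
      (\<lambda>u. exp ((real m - 1) * u) * (exp u - 1)^2)"

definition phi_in :: "real \<Rightarrow> real measure \<Rightarrow> nat \<Rightarrow> real" where
  "phi_in \<sigma>2 \<mu> n = \<sigma>2 / 2 * (real n ^ 2 - real n) + set_lebesgue_integral \<mu> (- {0})
      (\<lambda>u. exp (real n * u) - 1 - real n * (exp u - 1))"

definition sel_simplex :: "nat \<Rightarrow> (nat \<Rightarrow> real) set" where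
  "sel_simplex n = {t. (\<forall>i\<in>{1..n}. 0 < t i \<and> t i < 1) \<and> (\<forall>i\<in>{1..<n}. t i < t (Suc i))}"

definition selberg_integrand ::
  "real \<Rightarrow> real measure \<Rightarrow> nat \<Rightarrow> real \<Rightarrow> real \<Rightarrow> real \<Rightarrow> (nat \<Rightarrow> real) \<Rightarrow> real" where
  "selberg_integrand \<sigma>2 \<mu> n lam l1 l2 t =
     (\<Prod>i\<in>{1..n}. t i powr (l1 * dd \<sigma>2 \<mu> i) * (1 - t i) powr (l2 * dd \<sigma>2 \<mu> (n - i + 1))) *
     (\<Prod>p\<in>{1..n}. \<Prod>k\<in>{1..<p}. \<bar>t p - t k\<bar> powr (2 * lam * dd \<sigma>2 \<mu> (p - k)))"

definition selbergS ::
  "real \<Rightarrow> real measure \<Rightarrow> nat \<Rightarrow> real \<Rightarrow> real \<Rightarrow> real \<Rightarrow> real" where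
  "selbergS \<sigma>2 \<mu> n lam l1 l2 =
     (if n = 0 then 1 else
      set_lebesgue_integral (Pi\<^sub>M {1..n} (\<lambda>_. lborel)) (sel_simplex n)
        (selberg_integrand \<sigma>2 \<mu> n lam l1 l2))"

definition pin :: "nat \<Rightarrow> (nat \<Rightarrow> real) \<Rightarrow> nat \<Rightarrow> real" where
  "pin n t = t(1 := 0, n := 1)"

definition pinned_set :: "nat \<Rightarrow> (nat \<Rightarrow> real) set" where
  "pinned_set n = {t. \<forall>i\<in>{1..<n}. pin n t i < pin n t (Suc i)}"

definition pinned_integrand ::
  "real \<Rightarrow> real measure \<Rightarrow> nat \<Rightarrow> real \<Rightarrow> (nat \<Rightarrow> real) \<Rightarrow> real" where
  "pinned_integrand \<sigma>2 \<mu> n lam t =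
     (\<Prod>j\<in>{1..n}. \<Prod>i\<in>{1..<j}. \<bar>pin n t i - pin n t j\<bar> powr (2 * lam * dd \<sigma>2 \<mu> (j - i)))"

end

theory Submission
  imports Defs
begin



lemma PiM_affine:
  fixes J :: "nat set" and a c :: real
  assumes fin: "finite J" and c: "c > 0"
  shows "\<And>g. g \<in> borel_measurable (Pi\<^sub>M J (\<lambda>_. lborel)) \<Longrightarrow>
     (\<integral>\<^sup>+ (x::nat\<Rightarrow>real). g x \<partial>Pi\<^sub>M J (\<lambda>_. lborel)) =
       ennreal c ^ card J * (\<integral>\<^sup>+ (s::nat\<Rightarrow>real). g (\<lambda>i\<in>J. a + c * s i) \<partial>Pi\<^sub>M J (\<lambda>_. lborel))"
  using fin
proof (induction J)
  case empty
  interpret product_sigma_finite "\<lambda>_::nat. lborel :: real measure" by standard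
  show ?case 
    by (simp add: PiM_empty nn_integral_count_space_finite)
next
  case (insert i J)
  interpret product_sigma_finite "\<lambda>_::nat. lborel :: real measure" by standard
  note [measurable] = insert.prems
  have m1: "(\<lambda>x. \<integral>\<^sup>+ (y::real). g (x(i := a + c * y)) \<partial>lborel) \<in> borel_measurable (Pi\<^sub>M J (\<lambda>_. lborel))"
    using insert by measurable
  have "(\<integral>\<^sup>+ (x::nat\<Rightarrow>real). g x \<partial>Pi\<^sub>M (insert i J) (\<lambda>_. lborel))
      = (\<integral>\<^sup>+ (x::nat\<Rightarrow>real). (\<integral>\<^sup>+ (y::real). g (x(i := y)) \<partial>lborel) \<partial>Pi\<^sub>M J (\<lambda>_. lborel))"
    by (rule product_nn_integral_insert) (use insert in auto)
  also have "\<dots> = (\<integral>\<^sup>+ (x::nat\<Rightarrow>real). ennreal c * (\<integral>\<^sup>+ (y::real). g (x(i := a + c * y)) \<partial>lborel) \<partial>Pi\<^sub>M J (\<lambda>_. lborel))"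
  proof (rule nn_integral_cong)
    fix x :: "nat \<Rightarrow> real" assume x: "x \<in> space (Pi\<^sub>M J (\<lambda>_. lborel))"
    have "(\<lambda>y::real. g (x(i := y))) \<in> borel_measurable borel"
      using x insert by measurable
    then show "(\<integral>\<^sup>+ (y::real). g (x(i := y)) \<partial>lborel) = ennreal c * (\<integral>\<^sup>+ (y::real). g (x(i := a + c * y)) \<partial>lborel)"
      using nn_integral_real_affine[of "\<lambda>y. g (x(i := y))" c a] c by simp
  qed
  also have "\<dots> = ennreal c * (\<integral>\<^sup>+ (x::nat\<Rightarrow>real). (\<integral>\<^sup>+ (y::real). g (x(i := a + c * y)) \<partial>lborel) \<partial>Pi\<^sub>M J (\<lambda>_. lborel))"
    by (rule nn_integral_cmult[OF m1])
  also have "\<dots> = ennreal c * (ennreal c ^ card J * (\<integral>\<^sup>+ (s::nat\<Rightarrow>real). (\<integral>\<^sup>+ (y::real). g ((\<lambda>j\<in>J. a + c * s j)(i := a + c * y)) \<partial>lborel) \<partial>Pi\<^sub>M J (\<lambda>_. lborel)))"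
    by (subst insert.IH[OF m1]) simp
  also have "(\<integral>\<^sup>+ (s::nat\<Rightarrow>real). (\<integral>\<^sup>+ (y::real). g ((\<lambda>j\<in>J. a + c * s j)(i := a + c * y)) \<partial>lborel) \<partial>Pi\<^sub>M J (\<lambda>_. lborel))
     = (\<integral>\<^sup>+ (s::nat\<Rightarrow>real). g (\<lambda>j\<in>insert i J. a + c * s j) \<partial>Pi\<^sub>M (insert i J) (\<lambda>_. lborel))"
  proof (subst product_nn_integral_insert)
    show "(\<lambda>s. g (\<lambda>j\<in>insert i J. a + c * s j)) \<in> borel_measurable (Pi\<^sub>M (insert i J) (\<lambda>_. lborel))"
      by measurable
    show "(\<integral>\<^sup>+ (s::nat\<Rightarrow>real). (\<integral>\<^sup>+ (y::real). g ((\<lambda>j\<in>J. a + c * s j)(i := a + c * y)) \<partial>lborel) \<partial>Pi\<^sub>M J (\<lambda>_. lborel))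
       = (\<integral>\<^sup>+ (x::nat\<Rightarrow>real). (\<integral>\<^sup>+ (y::real). g (\<lambda>j\<in>insert i J. a + c * (x(i := y)) j) \<partial>lborel) \<partial>Pi\<^sub>M J (\<lambda>_. lborel))"
      using insert.hyps by (intro nn_integral_cong arg_cong[where f=g]) (auto simp: fun_eq_iff)
  qed (use insert in auto)
  finally show ?case using insert.hyps by (simp add: mult.assoc del: restrict_apply)
qed




lemma PiM_shift:
  fixes I :: "nat set"
  assumes fin: "finite I"
  shows "distr (Pi\<^sub>M I (\<lambda>_. lborel)) (Pi\<^sub>M (Suc ` I) (\<lambda>_. lborel)) (\<lambda>s. \<lambda>i\<in>Suc ` I. s (i - 1))
         = Pi\<^sub>M (Suc ` I) (\<lambda>_. lborel :: real measure)"
proof -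
  interpret product_sigma_finite "\<lambda>_::nat. lborel :: real measure" by standard
  have meas: "(\<lambda>s. \<lambda>i\<in>Suc ` I. s (i - 1)) \<in> measurable (Pi\<^sub>M I (\<lambda>_. lborel)) (Pi\<^sub>M (Suc ` I) (\<lambda>_. lborel :: real measure))"
    by (rule measurable_restrict) (auto intro!: measurable_component_singleton)
  show ?thesis
  proof (rule PiM_eqI)
    show "finite (Suc ` I)" using fin by simp
    show "sets (distr (Pi\<^sub>M I (\<lambda>_. lborel)) (Pi\<^sub>M (Suc ` I) (\<lambda>_. lborel)) (\<lambda>s. \<lambda>i\<in>Suc ` I. s (i - 1))) = sets (Pi\<^sub>M (Suc ` I) (\<lambda>_. lborel))"
      by simp
    fix A assume A: "\<And>i. i \<in> Suc ` I \<Longrightarrow> A i \<in> sets (lborel :: real measure)"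
    have pre: "(\<lambda>s. \<lambda>i\<in>Suc ` I. s (i - 1)) -` Pi\<^sub>E (Suc ` I) A \<inter> space (Pi\<^sub>M I (\<lambda>_. lborel))
        = Pi\<^sub>E I (\<lambda>i. A (Suc i))"
      by (auto simp: space_PiM PiE_def Pi_def extensional_def)
    have "emeasure (distr (Pi\<^sub>M I (\<lambda>_. lborel)) (Pi\<^sub>M (Suc ` I) (\<lambda>_. lborel)) (\<lambda>s. \<lambda>i\<in>Suc ` I. s (i - 1))) (Pi\<^sub>E (Suc ` I) A)
       = emeasure (Pi\<^sub>M I (\<lambda>_. lborel)) (Pi\<^sub>E I (\<lambda>i. A (Suc i)))"
      unfolding pre[symmetric] using A fin by (intro emeasure_distr[OF meas] sets_PiM_I_finite) auto
    also have "\<dots> = (\<Prod>i\<in>I. emeasure lborel (A (Suc i)))"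
      using A fin by (subst emeasure_PiM) auto
    also have "\<dots> = (\<Prod>i\<in>Suc ` I. emeasure lborel (A i))"
      by (subst prod.reindex) auto
    finally show "emeasure (distr (Pi\<^sub>M I (\<lambda>_. lborel)) (Pi\<^sub>M (Suc ` I) (\<lambda>_. lborel)) (\<lambda>s. \<lambda>i\<in>Suc ` I. s (i - 1))) (Pi\<^sub>E (Suc ` I) A)
       = (\<Prod>i\<in>Suc ` I. emeasure lborel (A i))" .
  qed
qed




lemma set_int_sum:
  fixes f :: "nat \<Rightarrow> real \<Rightarrow> real"
  assumes "\<And>i. i \<in> S \<Longrightarrow> set_integrable M A (f i)"
  shows "set_lebesgue_integral M A (\<lambda>x. \<Sum>i\<in>S. f i x) = (\<Sum>i\<in>S. set_lebesgue_integral M A (f i))"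
  using assms unfolding set_integrable_def set_lebesgue_integral_def
  by (simp add: sum_distrib_left integral_sum)

lemma set_int_sum_integrable:
  fixes f :: "nat \<Rightarrow> real \<Rightarrow> real"
  assumes "\<And>i. i \<in> S \<Longrightarrow> set_integrable M A (f i)"
  shows "set_integrable M A (\<lambda>x. \<Sum>i\<in>S. f i x)"
  using assms unfolding set_integrable_def
  by (simp add: sum_distrib_left)

lemma geom_identity:
  fixes x :: real
  shows "(\<Sum>m\<in>{1..n}. x ^ (m - 1) * (x - 1)^2) = (x - 1) * (x ^ n - 1)"
proof (induction n)
  case 0 then show ?case by simp
next
  case (Suc n) then show ?case by (simp add: algebra_simps power2_eq_square)
qed

lemma phi_step:
  assumes d_conv: "\<And>m::nat. m \<ge> 1 \<Longrightarrow>
          set_integrable \<mu> (- {0}) (\<lambda>u. exp ((real m - 1) * u) * (exp u - 1)^2)"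
    and phi_conv: "\<And>k::nat. k \<ge> 1 \<Longrightarrow>
          set_integrable \<mu> (- {0}) (\<lambda>u. exp (real k * u) - 1 - real k * (exp u - 1))"
    and n: "n \<ge> 1"
  shows "phi_in \<sigma>2 \<mu> (Suc n) = phi_in \<sigma>2 \<mu> n + (\<Sum>m\<in>{1..n}. dd \<sigma>2 \<mu> m)"
proof -
  let ?g = "\<lambda>m u. exp ((real m - 1) * u) * (exp u - 1)^2"
  let ?h = "\<lambda>k u. exp (real k * u) - 1 - real k * (exp u - 1)"
  have pt: "?h (Suc n) u = ?h n u + (\<Sum>m\<in>{1..n}. ?g m u)" for u
  proof -
    have e: "exp ((real m - 1) * u) = exp u ^ (m - 1)" if "m \<in> {1..n}" for m
      using that by (simp add: exp_of_nat_mult[symmetric] of_nat_diff)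
    have "(\<Sum>m\<in>{1..n}. ?g m u) = (\<Sum>m\<in>{1..n}. exp u ^ (m - 1) * (exp u - 1)^2)"
      by (rule sum.cong) (auto simp: e)
    also have "\<dots> = (exp u - 1) * (exp u ^ n - 1)" by (rule geom_identity)
    finally have s: "(\<Sum>m\<in>{1..n}. ?g m u) = (exp u - 1) * (exp u ^ n - 1)" .
    have "exp (real (Suc n) * u) = exp u * exp u ^ n"
      by (simp add: exp_of_nat_mult[symmetric] distrib_right exp_add)
    moreover have "exp (real n * u) = exp u ^ n"
      by (simp add: exp_of_nat_mult[symmetric])
    ultimately show ?thesis unfolding s by (simp add: algebra_simps)
  qed
  have i1: "set_integrable \<mu> (- {0}) (?h n)" using phi_conv n by simp
  have i2: "set_integrable \<mu> (- {0}) (\<lambda>u. \<Sum>m\<in>{1..n}. ?g m u)"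
    by (rule set_int_sum_integrable) (use d_conv in auto)
  have "set_lebesgue_integral \<mu> (- {0}) (?h (Suc n))
      = set_lebesgue_integral \<mu> (- {0}) (\<lambda>u. ?h n u + (\<Sum>m\<in>{1..n}. ?g m u))"
    by (simp only: pt)
  also have "\<dots> = set_lebesgue_integral \<mu> (- {0}) (?h n) + set_lebesgue_integral \<mu> (- {0}) (\<lambda>u. \<Sum>m\<in>{1..n}. ?g m u)"
    by (rule set_integral_add(2)[OF i1 i2])
  also have "set_lebesgue_integral \<mu> (- {0}) (\<lambda>u. \<Sum>m\<in>{1..n}. ?g m u) = (\<Sum>m\<in>{1..n}. set_lebesgue_integral \<mu> (- {0}) (?g m))"
    by (rule set_int_sum) (use d_conv in auto)
  finally have I: "set_lebesgue_integral \<mu> (- {0}) (?h (Suc n)) = set_lebesgue_integral \<mu> (- {0}) (?h n) + (\<Sum>m\<in>{1..n}. set_lebesgue_integral \<mu> (- {0}) (?g m))" .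
  have "\<sigma>2 / 2 * (real (Suc n) ^ 2 - real (Suc n)) = \<sigma>2 / 2 * (real n ^ 2 - real n) + real n * \<sigma>2"
    by (simp add: algebra_simps power2_eq_square)
  then show ?thesis
    unfolding phi_in_def dd_def using I by (simp add: sum.distrib)
qed

lemma phi_sum:
  assumes d_conv: "\<And>m::nat. m \<ge> 1 \<Longrightarrow>
          set_integrable \<mu> (- {0}) (\<lambda>u. exp ((real m - 1) * u) * (exp u - 1)^2)"
    and phi_conv: "\<And>k::nat. k \<ge> 1 \<Longrightarrow>
          set_integrable \<mu> (- {0}) (\<lambda>u. exp (real k * u) - 1 - real k * (exp u - 1))"
    and n: "n \<ge> 1"
  shows "(\<Sum>p\<in>{1..n}. \<Sum>k\<in>{1..<p}. dd \<sigma>2 \<mu> (p - k)) = phi_in \<sigma>2 \<mu> n"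
  using n
proof (induction n rule: dec_induct)
  case base
  then show ?case by (simp add: phi_in_def)
next
  case (step n)
  have r: "(\<Sum>k\<in>{1..<Suc n}. dd \<sigma>2 \<mu> (Suc n - k)) = (\<Sum>m\<in>{1..n}. dd \<sigma>2 \<mu> m)"
    by (rule sum.reindex_bij_witness[where i="\<lambda>m. Suc n - m" and j="\<lambda>k. Suc n - k"]) auto
  have "(\<Sum>p\<in>{1..Suc n}. \<Sum>k\<in>{1..<p}. dd \<sigma>2 \<mu> (p - k))
      = (\<Sum>p\<in>{1..n}. \<Sum>k\<in>{1..<p}. dd \<sigma>2 \<mu> (p - k)) + (\<Sum>k\<in>{1..<Suc n}. dd \<sigma>2 \<mu> (Suc n - k))"
    by simp
  also have "\<dots> = phi_in \<sigma>2 \<mu> (Suc n)"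
    using step r phi_step[OF d_conv phi_conv step(1)] by simp
  finally show ?case .
qed




lemma chain_mono:
  fixes f :: "nat \<Rightarrow> real"
  assumes ch: "\<forall>i\<in>{1..<n}. f i < f (Suc i)" and ij: "1 \<le> i" "i < j" "j \<le> n"
  shows "f i < f j"
  using ij
proof (induction j)
  case 0 then show ?case by simp
next
  case (Suc j)
  show ?case
  proof (cases "i = j")
    case True then show ?thesis using ch Suc.prems by auto
  next
    case False
    then have "f i < f j" using Suc by auto
    also have "f j < f (Suc j)" using ch Suc.prems False by auto
    finally show ?thesis .
  qed
qed

lemma chain_mono_le:
  fixes f :: "nat \<Rightarrow> real"
  assumes ch: "\<forall>i\<in>{1..<n}. f i < f (Suc i)" and ij: "1 \<le> i" "i \<le> j" "j \<le> n"
  shows "f i \<le> f j"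
  using chain_mono[OF ch, of i j] ij by (cases "i = j") auto

definition PP :: "real \<Rightarrow> real measure \<Rightarrow> nat \<Rightarrow> real \<Rightarrow> (nat \<Rightarrow> real) \<Rightarrow> real" where
  "PP \<sigma>2 \<mu> n lam u = (\<Prod>j\<in>{1..n}. \<Prod>i\<in>{1..<j}. \<bar>u i - u j\<bar> powr (2 * lam * dd \<sigma>2 \<mu> (j - i)))"

lemma scale_point:
  fixes t u :: "nat \<Rightarrow> real"
  assumes n: "n \<ge> 2" and ab: "0 < a" "a < b" "b < 1"
    and tu: "\<And>k. k \<in> {1..n} \<Longrightarrow> t k = a + (b - a) * u k"
    and u1: "u 1 = 0" and un: "u n = 1"
  shows "indicator (sel_simplex n) t * selberg_integrand \<sigma>2 \<mu> n lam 0 0 t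
       = (b - a) powr (\<Sum>p\<in>{1..n}. \<Sum>k\<in>{1..<p}. 2 * lam * dd \<sigma>2 \<mu> (p - k))
         * (indicator {u. \<forall>i\<in>{1..<n}. u i < u (Suc i)} u * PP \<sigma>2 \<mu> n lam u)"
proof -
  define c where "c = b - a"
  have c: "c > 0" using ab by (simp add: c_def)
  have t1: "t 1 = a" using tu[of 1] u1 n by simp
  have tn: "t n = b" using tu[of n] un n by (simp add: c_def)
  have diff: "t p - t k = c * (u p - u k)" if "p \<in> {1..n}" "k \<in> {1..n}" for p k
    using tu[OF that(1)] tu[OF that(2)] by (simp add: c_def algebra_simps)
  have chain_iff: "(\<forall>i\<in>{1..<n}. t i < t (Suc i)) \<longleftrightarrow> (\<forall>i\<in>{1..<n}. u i < u (Suc i))"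
  proof -
    have "t i < t (Suc i) \<longleftrightarrow> u i < u (Suc i)" if "i \<in> {1..<n}" for i
    proof -
      have e: "t (Suc i) - t i = c * (u (Suc i) - u i)" using diff[of "Suc i" i] that by auto
      have "0 < t (Suc i) - t i \<longleftrightarrow> 0 < u (Suc i) - u i"
        unfolding e using c by (simp add: zero_less_mult_iff)
      then show ?thesis by linarith
    qed
    then show ?thesis by auto
  qed
  have simp_iff: "t \<in> sel_simplex n \<longleftrightarrow> (\<forall>i\<in>{1..<n}. u i < u (Suc i))"
  proof
    assume "t \<in> sel_simplex n"
    then show "\<forall>i\<in>{1..<n}. u i < u (Suc i)" using chain_iff by (simp add: sel_simplex_def)
  next
    assume uc: "\<forall>i\<in>{1..<n}. u i < u (Suc i)"
    then have tc: "\<forall>i\<in>{1..<n}. t i < t (Suc i)" using chain_iff by simp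
    have "0 < t i \<and> t i < 1" if "i \<in> {1..n}" for i
    proof -
      have "t 1 \<le> t i" using chain_mono_le[OF tc, of 1 i] that by auto
      moreover have "t i \<le> t n" using chain_mono_le[OF tc, of i n] that by auto
      ultimately show ?thesis using t1 tn ab by auto
    qed
    then show "t \<in> sel_simplex n" using tc by (simp add: sel_simplex_def)
  qed
  show ?thesis
  proof (cases "\<forall>i\<in>{1..<n}. u i < u (Suc i)")
    case False
    then show ?thesis using simp_iff by simp
  next
    case True
    then have ts: "t \<in> sel_simplex n" using simp_iff by simp
    then have tpos: "0 < t i" "t i < 1" if "i \<in> {1..n}" for i
      using that by (auto simp: sel_simplex_def)
    have first: "(\<Prod>i\<in>{1..n}. t i powr (0 * dd \<sigma>2 \<mu> i) * (1 - t i) powr (0 * dd \<sigma>2 \<mu> (n - i + 1))) = 1"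
      by (rule prod.neutral) (use tpos in force)
    have "(\<Prod>p\<in>{1..n}. \<Prod>k\<in>{1..<p}. \<bar>t p - t k\<bar> powr (2 * lam * dd \<sigma>2 \<mu> (p - k)))
        = (\<Prod>p\<in>{1..n}. \<Prod>k\<in>{1..<p}. c powr (2 * lam * dd \<sigma>2 \<mu> (p - k)) * \<bar>u k - u p\<bar> powr (2 * lam * dd \<sigma>2 \<mu> (p - k)))"
    proof (intro prod.cong refl)
      fix p k assume "p \<in> {1..n}" "k \<in> {1..<p}"
      then have "t p - t k = c * (u p - u k)" by (intro diff) auto
      then show "\<bar>t p - t k\<bar> powr (2 * lam * dd \<sigma>2 \<mu> (p - k)) = c powr (2 * lam * dd \<sigma>2 \<mu> (p - k)) * \<bar>u k - u p\<bar> powr (2 * lam * dd \<sigma>2 \<mu> (p - k))"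
        using c by (simp add: abs_mult powr_mult abs_minus_commute)
    qed
    also have "\<dots> = (\<Prod>p\<in>{1..n}. \<Prod>k\<in>{1..<p}. c powr (2 * lam * dd \<sigma>2 \<mu> (p - k))) * PP \<sigma>2 \<mu> n lam u"
      unfolding PP_def prod.distrib ..
    also have "(\<Prod>p\<in>{1..n}. \<Prod>k\<in>{1..<p}. c powr (2 * lam * dd \<sigma>2 \<mu> (p - k))) = c powr (\<Sum>p\<in>{1..n}. \<Sum>k\<in>{1..<p}. 2 * lam * dd \<sigma>2 \<mu> (p - k))"
      using c by (simp add: powr_sum)
    finally show ?thesis
      using True ts unfolding selberg_integrand_def first by (simp add: c_def)
  qed
qed




lemma powr_int:
  fixes e c :: real
  assumes e: "e > -1" and c: "c \<ge> 0"
  shows "(\<integral>\<^sup>+ x. (if 0 < x \<and> x < c then ennreal (x powr e) else 0) \<partial>lborel) = ennreal (c powr (e+1) / (e+1))"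
proof -
  let ?f = "\<lambda>x::real. if 0 < x \<and> x < c then x powr e else 0"
  have "((\<lambda>x. x powr e) has_integral (c powr (e+1) / (e+1))) {0..c}"
    by (rule has_integral_powr_from_0[OF e c])
  then have "((\<lambda>x. if x \<in> {0..c} then x powr e else 0) has_integral (c powr (e+1) / (e+1))) UNIV"
    by (simp only: has_integral_restrict_UNIV)
  then have "(?f has_integral (c powr (e+1) / (e+1))) UNIV"
    using has_integral_spike_finite[of "{0,c}" UNIV ?f "\<lambda>x. if x \<in> {0..c} then x powr e else 0"] by auto
  then have "integral\<^sup>N lborel ?f = ennreal (c powr (e+1) / (e+1))"
    by (intro nn_integral_has_integral_lborel) auto
  then show ?thesis
    by (simp add: if_distrib cong: if_cong)
qed

definition KK :: "real \<Rightarrow> ennreal" where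
  "KK e = (\<integral>\<^sup>+ a. (\<integral>\<^sup>+ b. (if 0 < a \<and> a < b \<and> b < 1 then ennreal ((b - a) powr e) else 0) \<partial>lborel) \<partial>lborel)"

lemma KK_formula:
  assumes e: "e > -1"
  shows "KK e = ennreal (1 / ((e+1) * (e+2)))"
proof -
  have inner: "(\<integral>\<^sup>+ b. (if 0 < a \<and> a < b \<and> b < 1 then ennreal ((b - a) powr e) else 0) \<partial>lborel)
      = (if 0 < a \<and> a < 1 then ennreal ((1 - a) powr (e+1) / (e+1)) else 0)" for a :: real
  proof (cases "0 < a \<and> a < 1")
    case True
    have "(\<integral>\<^sup>+ b. (if 0 < a \<and> a < b \<and> b < 1 then ennreal ((b - a) powr e) else 0) \<partial>lborel)
       = ennreal \<bar>1\<bar> * (\<integral>\<^sup>+ x. (if 0 < a \<and> a < a + 1 * x \<and> a + 1 * x < 1 then ennreal ((a + 1 * x - a) powr e) else 0) \<partial>lborel)"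
      by (rule nn_integral_real_affine) auto
    also have "\<dots> = (\<integral>\<^sup>+ x. (if 0 < x \<and> x < 1 - a then ennreal (x powr e) else 0) \<partial>lborel)"
      using True by (auto intro!: nn_integral_cong)
    also have "\<dots> = ennreal ((1 - a) powr (e+1) / (e+1))"
      using True by (intro powr_int e) auto
    finally show ?thesis using True by simp
  next
    case False
    then have "(\<lambda>b. if 0 < a \<and> a < b \<and> b < 1 then ennreal ((b - a) powr e) else 0) = (\<lambda>_. 0)" by auto
    then show ?thesis using False by auto
  qed
  have "KK e = (\<integral>\<^sup>+ a. (if 0 < a \<and> a < 1 then ennreal ((1 - a) powr (e+1) / (e+1)) else 0) \<partial>lborel)"
    unfolding KK_def inner ..
  also have "\<dots> = ennreal \<bar>-1\<bar> * (\<integral>\<^sup>+ x. (if 0 < 1 + (-1) * x \<and> 1 + (-1) * x < 1 then ennreal ((1 - (1 + (-1) * x)) powr (e+1) / (e+1)) else 0) \<partial>lborel)"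
    by (rule nn_integral_real_affine) auto
  also have "\<dots> = (\<integral>\<^sup>+ x. ennreal (1 / (e+1)) * (if 0 < x \<and> x < 1 then ennreal (x powr (e+1)) else 0) \<partial>lborel)"
    using e by (simp, intro nn_integral_cong) (auto simp: ennreal_mult'[symmetric] divide_simps)
  also have "\<dots> = ennreal (1 / (e+1)) * (\<integral>\<^sup>+ x. (if 0 < x \<and> x < 1 then ennreal (x powr (e+1)) else 0) \<partial>lborel)"
    by (rule nn_integral_cmult) auto
  also have "\<dots> = ennreal (1 / (e+1)) * ennreal (1 powr (e+1+1) / (e+1+1))"
    using e by (subst powr_int) auto
  also have "\<dots> = ennreal (1 / ((e+1) * (e+2)))"
    using e by (simp add: ennreal_mult'[symmetric] field_simps)
  finally show ?thesis .
qed

lemma KK_anti: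
  assumes "e \<le> e'"
  shows "KK e' \<le> KK e"
  unfolding KK_def
proof (intro nn_integral_mono)
  fix a b :: real
  show "(if 0 < a \<and> a < b \<and> b < 1 then ennreal ((b - a) powr e') else 0)
      \<le> (if 0 < a \<and> a < b \<and> b < 1 then ennreal ((b - a) powr e) else 0)"
    using assms by (auto intro!: ennreal_leI powr_mono')
qed

lemma KK_infinite:
  assumes e: "e \<le> -1"
  shows "KK e = \<infinity>"
proof (rule ccontr)
  assume "KK e \<noteq> \<infinity>"
  then obtain r where r: "KK e = ennreal r" "r \<ge> 0" by (cases "KK e") auto
  define \<delta> where "\<delta> = 1 / (2 * (r + 1))"
  have d: "\<delta> > 0" "\<delta> \<le> 1 / 2" using r by (auto simp: \<delta>_def field_simps)
  have "KK (-1 + \<delta>) \<le> KK e" using e d by (intro KK_anti) auto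
  also have "KK (-1 + \<delta>) = ennreal (1 / (\<delta> * (\<delta> + 1)))"
    using d by (subst KK_formula) (auto simp: add.commute)
  finally have le: "1 / (\<delta> * (\<delta> + 1)) \<le> r" using r d by simp
  have "1 / (\<delta> * (\<delta> + 1)) \<ge> 1 / (2 * \<delta>)"
    using d by (intro divide_left_mono mult_pos_pos) auto
  moreover have "1 / (2 * \<delta>) = r + 1" using r by (simp add: \<delta>_def)
  ultimately show False using le by simp
qed




lemma outside_meas:
  fixes i :: nat
  assumes eq: "\<And>s. s \<in> space (Pi\<^sub>M I (\<lambda>_. lborel :: real measure)) \<Longrightarrow> s i = undefined"
  shows "(\<lambda>s. s i) \<in> borel_measurable (Pi\<^sub>M I (\<lambda>_. lborel :: real measure))"
  apply (rule measurable_cong[THEN iffD2])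
  apply (rule eq) apply assumption
  apply simp
  done

lemma pin_meas:
  assumes "n \<ge> 2"
  shows "(\<lambda>s. pin n s i) \<in> borel_measurable (Pi\<^sub>M {2..n-1} (\<lambda>_. lborel))"
proof -
  consider "i = n" | "i = 1" "i \<noteq> n" | "i \<noteq> 1" "i \<noteq> n" "i \<in> {2..n-1}" | "i \<noteq> 1" "i \<noteq> n" "i \<notin> {2..n-1}" by blast
  then show ?thesis
  proof cases
    case 3 then show ?thesis unfolding pin_def by (simp add: measurable_component_singleton)
  next
    case 4
    have "(\<lambda>s. pin n s i) = (\<lambda>s. s i)" using 4 by (simp add: pin_def fun_eq_iff)
    have "(\<lambda>s::nat\<Rightarrow>real. s i) \<in> borel_measurable (Pi\<^sub>M {2..n-1} (\<lambda>_. lborel))"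
    proof -
      have eq: "\<And>s. s \<in> space (Pi\<^sub>M {2..n-1} (\<lambda>_. lborel :: real measure)) \<Longrightarrow> s i = undefined"
        using 4 by (auto simp: space_PiM PiE_def extensional_def)
      have c: "(\<lambda>_. undefined :: real) \<in> borel_measurable (Pi\<^sub>M {2..n-1} (\<lambda>_. lborel :: real measure))" by simp
      show ?thesis by (rule outside_meas) (rule eq)
    qed
    then show ?thesis using \<open>(\<lambda>s. pin n s i) = (\<lambda>s. s i)\<close> by simp
  qed (auto simp: pin_def)
qed

lemma pinned_meas:
  assumes n: "n \<ge> 2"
  shows "(\<lambda>s. indicator (pinned_set n) s * pinned_integrand \<sigma>2 \<mu> n lam s) \<in> borel_measurable (Pi\<^sub>M {2..n-1} (\<lambda>_. lborel))"
proof -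
  note pm[measurable] = pin_meas[OF n]
  have "Measurable.pred (Pi\<^sub>M {2..n-1} (\<lambda>_. lborel)) (\<lambda>s. pin n s i < pin n s (Suc i))" for i
    by (intro borel_measurable_pred_less pm)
  have "Measurable.pred (Pi\<^sub>M {2..n-1} (\<lambda>_. lborel)) (\<lambda>s. s \<in> pinned_set n)"
    unfolding pinned_set_def mem_Collect_eq by measurable
  then show ?thesis
    unfolding pinned_integrand_def indicator_def by measurable
qed


lemma coord_meas:
  "(\<lambda>s::nat\<Rightarrow>real. s i) \<in> borel_measurable (Pi\<^sub>M I (\<lambda>_. lborel))"
proof (cases "i \<in> I")
  case True then show ?thesis using measurable_component_singleton[OF True, of "\<lambda>_. lborel :: real measure"] by simp
next
  case False
  show ?thesis by (rule outside_meas) (use False in \<open>auto simp: space_PiM PiE_def extensional_def\<close>)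
qed

lemma simplex_meas:
  "(\<lambda>t. indicator (sel_simplex n) t * selberg_integrand \<sigma>2 \<mu> n lam l1 l2 t) \<in> borel_measurable (Pi\<^sub>M I (\<lambda>_. lborel))"
proof -
  note coord_meas[measurable]
  have "Measurable.pred (Pi\<^sub>M I (\<lambda>_. lborel)) (\<lambda>t. t \<in> sel_simplex n)"
    unfolding sel_simplex_def mem_Collect_eq by measurable
  then show ?thesis
    unfolding selberg_integrand_def indicator_def by measurable
qed

lemma selberg_nonneg: "0 \<le> selberg_integrand \<sigma>2 \<mu> n lam l1 l2 t"
  unfolding selberg_integrand_def by (intro mult_nonneg_nonneg prod_nonneg) auto

lemma pinned_nonneg: "0 \<le> pinned_integrand \<sigma>2 \<mu> n lam t"
  unfolding pinned_integrand_def by (intro prod_nonneg) auto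


lemma inner_zero:
  assumes n: "n \<ge> 2" and ab: "\<not> (0 < a \<and> a < b \<and> b < 1)"
  shows "t 1 = a \<Longrightarrow> t n = b \<Longrightarrow> indicator (sel_simplex n) t * selberg_integrand \<sigma>2 \<mu> n lam 0 0 t = 0"
proof -
  assume t: "t 1 = a" "t n = b"
  have "t \<notin> sel_simplex n"
  proof
    assume ts: "t \<in> sel_simplex n"
    then have ch: "\<forall>i\<in>{1..<n}. t i < t (Suc i)" and r: "\<forall>i\<in>{1..n}. 0 < t i \<and> t i < 1"
      by (auto simp: sel_simplex_def)
    have "t 1 < t n" using chain_mono[OF ch, of 1 n] n by auto
    moreover have "0 < t 1" "t n < 1" using r n by auto
    ultimately show False using ab t by auto
  qed
  then show ?thesis by simp
qed

lemma main1:
  assumes n: "n \<ge> 2"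
  shows "(\<integral>\<^sup>+ t. ennreal (indicator (sel_simplex n) t * selberg_integrand \<sigma>2 \<mu> n lam 0 0 t) \<partial>Pi\<^sub>M {1..n} (\<lambda>_. lborel))
       = (\<integral>\<^sup>+ s. ennreal (indicator (pinned_set n) s * pinned_integrand \<sigma>2 \<mu> n lam s) \<partial>Pi\<^sub>M {2..n-1} (\<lambda>_. lborel))
         * KK (real n - 2 + (\<Sum>p\<in>{1..n}. \<Sum>k\<in>{1..<p}. 2 * lam * dd \<sigma>2 \<mu> (p - k)))"
proof -
  interpret product_sigma_finite "\<lambda>_::nat. lborel :: real measure" by standard
  define J where "J = {2..n-1}"
  define E where "E = (\<Sum>p\<in>{1..n}. \<Sum>k\<in>{1..<p}. 2 * lam * dd \<sigma>2 \<mu> (p - k))"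
  define G where "G t = ennreal (indicator (sel_simplex n) t * selberg_integrand \<sigma>2 \<mu> n lam 0 0 t)" for t
  define H where "H s = ennreal (indicator (pinned_set n) s * pinned_integrand \<sigma>2 \<mu> n lam s)" for s
  define NQ where "NQ = (\<integral>\<^sup>+ s. H s \<partial>Pi\<^sub>M J (\<lambda>_. lborel))"
  have Gm[measurable]: "G \<in> borel_measurable (Pi\<^sub>M I (\<lambda>_. lborel))" for I
    unfolding G_def using simplex_meas by measurable
  have Hm[measurable]: "H \<in> borel_measurable (Pi\<^sub>M J (\<lambda>_. lborel))"
    unfolding H_def J_def using pinned_meas[OF n] by measurable
  have finJ: "finite J" by (simp add: J_def)
  have cardJ: "card J = n - 2" by (simp add: J_def)
  have I_eq: "{1..n} = insert 1 (insert n J)" using n by (auto simp: J_def)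
  have n1: "1 \<notin> insert n J" "n \<notin> J" using n by (auto simp: J_def)
  have "(\<integral>\<^sup>+ t. G t \<partial>Pi\<^sub>M {1..n} (\<lambda>_. lborel))
      = (\<integral>\<^sup>+ a. (\<integral>\<^sup>+ x. G (x(1 := a)) \<partial>Pi\<^sub>M (insert n J) (\<lambda>_. lborel)) \<partial>lborel)"
    unfolding I_eq by (rule product_nn_integral_insert_rev) (use finJ n1 in auto)
  also have "\<dots> = (\<integral>\<^sup>+ a. (\<integral>\<^sup>+ b. (\<integral>\<^sup>+ x. G (x(n := b, 1 := a)) \<partial>Pi\<^sub>M J (\<lambda>_. lborel)) \<partial>lborel) \<partial>lborel)"
  proof (rule nn_integral_cong)
    fix a :: real
    have m: "(\<lambda>x. G (x(1 := a))) \<in> borel_measurable (Pi\<^sub>M (insert n J) (\<lambda>_. lborel))"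
      by measurable
    show "(\<integral>\<^sup>+ x. G (x(1 := a)) \<partial>Pi\<^sub>M (insert n J) (\<lambda>_. lborel))
        = (\<integral>\<^sup>+ b. (\<integral>\<^sup>+ x. G (x(n := b, 1 := a)) \<partial>Pi\<^sub>M J (\<lambda>_. lborel)) \<partial>lborel)"
      by (rule product_nn_integral_insert_rev[OF finJ n1(2) m])
  qed
  also have "\<dots> = (\<integral>\<^sup>+ a. (\<integral>\<^sup>+ b. NQ * (if 0 < a \<and> a < b \<and> b < 1 then ennreal ((b - a) powr (real n - 2 + E)) else 0) \<partial>lborel) \<partial>lborel)"
  proof (intro nn_integral_cong)
    fix a b :: real
    show "(\<integral>\<^sup>+ x. G (x(n := b, 1 := a)) \<partial>Pi\<^sub>M J (\<lambda>_. lborel))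
        = NQ * (if 0 < a \<and> a < b \<and> b < 1 then ennreal ((b - a) powr (real n - 2 + E)) else 0)"
    proof (cases "0 < a \<and> a < b \<and> b < 1")
      case False
      have "G (x(n := b, 1 := a)) = 0" for x
      proof -
        have "indicator (sel_simplex n) (x(n := b, 1 := a)) * selberg_integrand \<sigma>2 \<mu> n lam 0 0 (x(n := b, 1 := a)) = 0"
          by (rule inner_zero[OF n False]) (use n in auto)
        then show ?thesis unfolding G_def by (simp only: ennreal_0)
      qed
      then show ?thesis using False by (simp del: fun_upd_apply) blast
    next
      case True
      define c where "c = b - a"
      have c: "c > 0" using True by (simp add: c_def)
      have gm: "(\<lambda>x. G (x(n := b, 1 := a))) \<in> borel_measurable (Pi\<^sub>M J (\<lambda>_. lborel))"
        by measurable
      have "(\<integral>\<^sup>+ x. G (x(n := b, 1 := a)) \<partial>Pi\<^sub>M J (\<lambda>_. lborel))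
          = ennreal c ^ card J * (\<integral>\<^sup>+ s. G ((\<lambda>j\<in>J. a + c * s j)(n := b, 1 := a)) \<partial>Pi\<^sub>M J (\<lambda>_. lborel))"
        by (rule PiM_affine[OF finJ c gm])
      also have "(\<integral>\<^sup>+ s. G ((\<lambda>j\<in>J. a + c * s j)(n := b, 1 := a)) \<partial>Pi\<^sub>M J (\<lambda>_. lborel))
          = (\<integral>\<^sup>+ s. ennreal (c powr E) * H s \<partial>Pi\<^sub>M J (\<lambda>_. lborel))"
      proof (rule nn_integral_cong)
        fix s :: "nat \<Rightarrow> real"
        let ?t = "(\<lambda>j\<in>J. a + c * s j)(n := b, 1 := a)"
        have tu: "?t k = a + (b - a) * pin n s k" if "k \<in> {1..n}" for k
          using that n by (auto simp: pin_def J_def c_def)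
        have "indicator (sel_simplex n) ?t * selberg_integrand \<sigma>2 \<mu> n lam 0 0 ?t
            = (b - a) powr E * (indicator {u. \<forall>i\<in>{1..<n}. u i < u (Suc i)} (pin n s) * PP \<sigma>2 \<mu> n lam (pin n s))"
          unfolding E_def using n True by (intro scale_point tu) (auto simp: pin_def)
        also have "indicator {u. \<forall>i\<in>{1..<n}. u i < u (Suc i)} (pin n s) = (indicator (pinned_set n) s :: real)"
          by (simp add: pinned_set_def indicator_def)
        also have "PP \<sigma>2 \<mu> n lam (pin n s) = pinned_integrand \<sigma>2 \<mu> n lam s"
          by (simp add: PP_def pinned_integrand_def)
        finally have eq: "indicator (sel_simplex n) ?t * selberg_integrand \<sigma>2 \<mu> n lam 0 0 ?t
            = (b - a) powr E * (indicator (pinned_set n) s * pinned_integrand \<sigma>2 \<mu> n lam s)" .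
        show "G ?t = ennreal (c powr E) * H s"
          unfolding G_def H_def eq unfolding c_def by (rule ennreal_mult') simp
      qed
      also have "\<dots> = ennreal (c powr E) * NQ"
        unfolding NQ_def by (rule nn_integral_cmult) (rule Hm)
      finally have "(\<integral>\<^sup>+ x. G (x(n := b, 1 := a)) \<partial>Pi\<^sub>M J (\<lambda>_. lborel)) = ennreal c ^ (n - 2) * (ennreal (c powr E) * NQ)"
        by (simp only: cardJ)
      also have "ennreal c ^ (n - 2) * (ennreal (c powr E) * NQ) = NQ * ennreal (c powr (real n - 2 + E))"
      proof -
        have "ennreal c ^ (n - 2) * ennreal (c powr E) = ennreal (c powr (real (n - 2)) * c powr E)"
          using c by (simp add: ennreal_power ennreal_mult'[symmetric] powr_realpow)
        also have "c powr (real (n - 2)) * c powr E = c powr (real n - 2 + E)"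
          using c n by (simp add: powr_add[symmetric] of_nat_diff)
        finally show ?thesis by (simp add: ac_simps)
      qed
      finally show ?thesis using True by (simp add: c_def)
    qed
  qed
  also have "\<dots> = (\<integral>\<^sup>+ a. NQ * (\<integral>\<^sup>+ b. (if 0 < a \<and> a < b \<and> b < 1 then ennreal ((b - a) powr (real n - 2 + E)) else 0) \<partial>lborel) \<partial>lborel)"
  proof (rule nn_integral_cong)
    fix a :: real
    have "(\<lambda>b::real. if 0 < a \<and> a < b \<and> b < 1 then ennreal ((b - a) powr (real n - 2 + E)) else 0) \<in> borel_measurable lborel"
      by measurable
    then show "(\<integral>\<^sup>+ b. NQ * (if 0 < a \<and> a < b \<and> b < 1 then ennreal ((b - a) powr (real n - 2 + E)) else 0) \<partial>lborel)
      = NQ * (\<integral>\<^sup>+ b. (if 0 < a \<and> a < b \<and> b < 1 then ennreal ((b - a) powr (real n - 2 + E)) else 0) \<partial>lborel)"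
      by (rule nn_integral_cmult)
  qed
  also have "\<dots> = NQ * KK (real n - 2 + E)"
  proof -
    have "(\<lambda>a::real. \<integral>\<^sup>+ b. (if 0 < a \<and> a < b \<and> b < 1 then ennreal ((b - a) powr (real n - 2 + E)) else 0) \<partial>lborel) \<in> borel_measurable lborel"
      by measurable
    then show ?thesis unfolding KK_def by (rule nn_integral_cmult)
  qed
  finally show ?thesis unfolding G_def H_def NQ_def J_def E_def .
qed

lemma prod_pinned_split:
  fixes u :: "nat \<Rightarrow> real" and e :: "nat \<Rightarrow> real"
  assumes u1: "u 1 = 0" and un: "u (Suc (Suc m)) = 1"
  shows "(\<Prod>j\<in>{1..Suc (Suc m)}. \<Prod>i\<in>{1..<j}. \<bar>u i - u j\<bar> powr e (j - i))
   = (\<Prod>p\<in>{1..m}. \<bar>u (Suc p)\<bar> powr e p * (\<Prod>k\<in>{1..<p}. \<bar>u (Suc k) - u (Suc p)\<bar> powr e (p - k)))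
     * (\<Prod>k\<in>{1..m}. \<bar>u (Suc k) - 1\<bar> powr e (Suc m - k))"
proof -
  let ?X = "\<lambda>j. \<Prod>i\<in>{1..<j}. \<bar>u i - u j\<bar> powr e (j - i)"
  have "(\<Prod>j\<in>{1..Suc (Suc m)}. ?X j) = (\<Prod>j\<in>{1..Suc m}. ?X j) * ?X (Suc (Suc m))"
    by simp
  also have "(\<Prod>j\<in>{1..Suc m}. ?X j) = ?X 1 * (\<Prod>j\<in>{Suc 1..Suc m}. ?X j)"
    by (rule prod.atLeast_Suc_atMost) simp
  also have "(\<Prod>j\<in>{Suc 1..Suc m}. ?X j) = (\<Prod>p\<in>{1..m}. ?X (Suc p))"
    by (simp only: prod.atLeast_Suc_atMost_Suc_shift comp_def)
  also have "?X 1 = 1" by simp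
  also have "(\<Prod>p\<in>{1..m}. ?X (Suc p)) = (\<Prod>p\<in>{1..m}. \<bar>u (Suc p)\<bar> powr e p * (\<Prod>k\<in>{1..<p}. \<bar>u (Suc k) - u (Suc p)\<bar> powr e (p - k)))"
  proof (rule prod.cong[OF refl])
    fix p assume p: "p \<in> {1..m}"
    have "?X (Suc p) = \<bar>u 1 - u (Suc p)\<bar> powr e (Suc p - 1) * (\<Prod>i\<in>{Suc 1..<Suc p}. \<bar>u i - u (Suc p)\<bar> powr e (Suc p - i))"
      by (rule prod.atLeast_Suc_lessThan) (use p in auto)
    also have "(\<Prod>i\<in>{Suc 1..<Suc p}. \<bar>u i - u (Suc p)\<bar> powr e (Suc p - i)) = (\<Prod>k\<in>{1..<p}. \<bar>u (Suc k) - u (Suc p)\<bar> powr e (p - k))"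
      by (simp only: prod.atLeast_Suc_lessThan_Suc_shift comp_def diff_Suc_Suc)
    finally show "?X (Suc p) = \<bar>u (Suc p)\<bar> powr e p * (\<Prod>k\<in>{1..<p}. \<bar>u (Suc k) - u (Suc p)\<bar> powr e (p - k))"
      using u1 by simp
  qed
  also have "?X (Suc (Suc m)) = (\<Prod>k\<in>{1..m}. \<bar>u (Suc k) - 1\<bar> powr e (Suc m - k))"
  proof -
    have "?X (Suc (Suc m)) = \<bar>u 1 - u (Suc (Suc m))\<bar> powr e (Suc (Suc m) - 1) * (\<Prod>i\<in>{Suc 1..<Suc (Suc m)}. \<bar>u i - u (Suc (Suc m))\<bar> powr e (Suc (Suc m) - i))"
      by (rule prod.atLeast_Suc_lessThan) simp
    also have "(\<Prod>i\<in>{Suc 1..<Suc (Suc m)}. \<bar>u i - u (Suc (Suc m))\<bar> powr e (Suc (Suc m) - i)) = (\<Prod>k\<in>{1..<Suc m}. \<bar>u (Suc k) - u (Suc (Suc m))\<bar> powr e (Suc m - k))"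
      by (simp only: prod.atLeast_Suc_lessThan_Suc_shift comp_def diff_Suc_Suc)
    also have "{1..<Suc m} = {1..m}" by auto
    finally show ?thesis using u1 un by simp
  qed
  finally show ?thesis by simp
qed

lemma shift_point:
  fixes w s :: "nat \<Rightarrow> real"
  assumes m: "m \<ge> 1" and ws: "\<And>j. j \<in> {2..m+1} \<Longrightarrow> w j = s (j - 1)"
  shows "indicator (pinned_set (m+2)) w * pinned_integrand \<sigma>2 \<mu> (m+2) lam w
       = indicator (sel_simplex m) s * selberg_integrand \<sigma>2 \<mu> m lam (2*lam) (2*lam) s"
proof -
  define n where "n = m + 2"
  define u where "u = pin n w"
  have u1: "u 1 = 0" and un: "u n = 1" and un': "u (Suc (Suc m)) = 1"
    using m by (auto simp: u_def pin_def n_def)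
  have us: "u (Suc k) = s k" if "k \<in> {1..m}" for k
    using that ws[of "Suc k"] by (auto simp: u_def pin_def n_def)
  have iff: "w \<in> pinned_set n \<longleftrightarrow> s \<in> sel_simplex m"
  proof
    assume "w \<in> pinned_set n"
    then have ch: "\<forall>i\<in>{1..<n}. u i < u (Suc i)" by (simp add: pinned_set_def u_def)
    have "0 < s i \<and> s i < 1" if i: "i \<in> {1..m}" for i
    proof -
      have "u 1 < u (Suc i)" using chain_mono[OF ch, of 1 "Suc i"] i by (auto simp: n_def)
      moreover have "u (Suc i) < u n" using chain_mono[OF ch, of "Suc i" n] i by (auto simp: n_def)
      ultimately show ?thesis using u1 un us[OF i] by simp
    qed
    moreover have "s i < s (Suc i)" if i: "i \<in> {1..<m}" for i
      using ch[rule_format, of "Suc i"] i us[of i] us[of "Suc i"] by (auto simp: n_def)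
    ultimately show "s \<in> sel_simplex m" by (simp add: sel_simplex_def)
  next
    assume "s \<in> sel_simplex m"
    then have sr: "\<And>i. i \<in> {1..m} \<Longrightarrow> 0 < s i \<and> s i < 1" and sc: "\<And>i. i \<in> {1..<m} \<Longrightarrow> s i < s (Suc i)"
      by (auto simp: sel_simplex_def)
    have "u i < u (Suc i)" if i: "i \<in> {1..<n}" for i
    proof -
      consider "i = 1" | "i = Suc m" | "2 \<le> i" "i \<le> m" using i by (force simp: n_def)
      then show ?thesis
      proof cases
        case 1 then show ?thesis using u1 us[of 1] sr[of 1] m by auto
      next
        case 2 then show ?thesis using un' us[of m] sr[of m] m by auto
      next
        case 3
        then obtain k where k: "i = Suc k" "k \<in> {1..<m}" by (cases i) auto
        then show ?thesis using us[of k] us[of "Suc k"] sc[of k] by auto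
      qed
    qed
    then show "w \<in> pinned_set n" by (simp add: pinned_set_def u_def)
  qed
  show ?thesis
  proof (cases "s \<in> sel_simplex m")
    case False
    then show ?thesis using iff by (simp add: n_def)
  next
    case True
    then have sr: "\<And>i. i \<in> {1..m} \<Longrightarrow> 0 < s i \<and> s i < 1" by (auto simp: sel_simplex_def)
    define e where "e k = 2 * lam * dd \<sigma>2 \<mu> k" for k
    have "pinned_integrand \<sigma>2 \<mu> n lam w = (\<Prod>j\<in>{1..Suc (Suc m)}. \<Prod>i\<in>{1..<j}. \<bar>u i - u j\<bar> powr e (j - i))"
      by (simp add: pinned_integrand_def u_def e_def n_def)
    also have "\<dots> = (\<Prod>p\<in>{1..m}. \<bar>u (Suc p)\<bar> powr e p * (\<Prod>k\<in>{1..<p}. \<bar>u (Suc k) - u (Suc p)\<bar> powr e (p - k)))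
     * (\<Prod>k\<in>{1..m}. \<bar>u (Suc k) - 1\<bar> powr e (Suc m - k))"
      by (rule prod_pinned_split[OF u1 un'])
    also have "\<dots> = (\<Prod>p\<in>{1..m}. s p powr e p * (\<Prod>k\<in>{1..<p}. \<bar>s p - s k\<bar> powr e (p - k)))
     * (\<Prod>k\<in>{1..m}. (1 - s k) powr e (m - k + 1))"
    proof -
      have A: "(\<Prod>p\<in>{1..m}. \<bar>u (Suc p)\<bar> powr e p * (\<Prod>k\<in>{1..<p}. \<bar>u (Suc k) - u (Suc p)\<bar> powr e (p - k)))
          = (\<Prod>p\<in>{1..m}. s p powr e p * (\<Prod>k\<in>{1..<p}. \<bar>s p - s k\<bar> powr e (p - k)))"
      proof (rule prod.cong[OF refl])
        fix p assume p: "p \<in> {1..m}"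
        have a: "\<bar>u (Suc p)\<bar> = s p" using us[OF p] sr[OF p] by simp
        have b: "(\<Prod>k\<in>{1..<p}. \<bar>u (Suc k) - u (Suc p)\<bar> powr e (p - k)) = (\<Prod>k\<in>{1..<p}. \<bar>s p - s k\<bar> powr e (p - k))"
          by (rule prod.cong[OF refl]) (use p us in \<open>auto simp: abs_minus_commute\<close>)
        show "\<bar>u (Suc p)\<bar> powr e p * (\<Prod>k\<in>{1..<p}. \<bar>u (Suc k) - u (Suc p)\<bar> powr e (p - k))
            = s p powr e p * (\<Prod>k\<in>{1..<p}. \<bar>s p - s k\<bar> powr e (p - k))" by (simp only: a b)
      qed
      have B: "(\<Prod>k\<in>{1..m}. \<bar>u (Suc k) - 1\<bar> powr e (Suc m - k)) = (\<Prod>k\<in>{1..m}. (1 - s k) powr e (m - k + 1))"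
      proof (rule prod.cong[OF refl])
        fix k assume k: "k \<in> {1..m}"
        have "\<bar>u (Suc k) - 1\<bar> = 1 - s k" using us[OF k] sr[OF k] by simp
        moreover have "Suc m - k = m - k + 1" using k by auto
        ultimately show "\<bar>u (Suc k) - 1\<bar> powr e (Suc m - k) = (1 - s k) powr e (m - k + 1)" by simp
      qed
      show ?thesis by (simp only: A B)
    qed
    also have "\<dots> = selberg_integrand \<sigma>2 \<mu> m lam (2*lam) (2*lam) s"
      unfolding selberg_integrand_def e_def prod.distrib by (simp add: ac_simps)
    finally show ?thesis using True iff by (simp add: n_def)
  qed
qed


lemma second:
  assumes n: "n \<ge> 2"
  shows "set_lebesgue_integral (Pi\<^sub>M {2..n-1} (\<lambda>_. lborel)) (pinned_set n) (pinned_integrand \<sigma>2 \<mu> n lam)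
       = selbergS \<sigma>2 \<mu> (n-2) lam (2*lam) (2*lam)"
proof (cases "n = 2")
  case True
  have "pinned_integrand \<sigma>2 \<mu> 2 lam (\<lambda>_. undefined) = 1"
    by (simp add: pinned_integrand_def pin_def numeral_2_eq_2)
  moreover have "(\<lambda>_. undefined) \<in> pinned_set 2"
    by (simp add: pinned_set_def pin_def numeral_2_eq_2)
  ultimately show ?thesis using True
    by (simp add: set_lebesgue_integral_def PiM_empty lebesgue_integral_count_space_finite selbergS_def)
next
  case False
  define m where "m = n - 2"
  have m: "m \<ge> 1" "n = m + 2" using n False by (auto simp: m_def)
  have J: "{2..n-1} = Suc ` {1..m}" using m by (auto simp: image_iff intro: exI[where x="_ - 1"])
  define T where "T s = (\<lambda>i\<in>Suc ` {1..m}. s (i - 1))" for s :: "nat \<Rightarrow> real"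
  have Tm: "T \<in> measurable (Pi\<^sub>M {1..m} (\<lambda>_. lborel)) (Pi\<^sub>M (Suc ` {1..m}) (\<lambda>_. lborel :: real measure))"
    unfolding T_def by (rule measurable_restrict) (auto intro!: coord_meas)
  have Fm: "(\<lambda>s. indicator (pinned_set n) s *\<^sub>R pinned_integrand \<sigma>2 \<mu> n lam s) \<in> borel_measurable (Pi\<^sub>M (Suc ` {1..m}) (\<lambda>_. lborel))"
    using pinned_meas[OF n] unfolding J by simp
  have "set_lebesgue_integral (Pi\<^sub>M {2..n-1} (\<lambda>_. lborel)) (pinned_set n) (pinned_integrand \<sigma>2 \<mu> n lam)
      = integral\<^sup>L (distr (Pi\<^sub>M {1..m} (\<lambda>_. lborel)) (Pi\<^sub>M (Suc ` {1..m}) (\<lambda>_. lborel)) T)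
          (\<lambda>s. indicator (pinned_set n) s *\<^sub>R pinned_integrand \<sigma>2 \<mu> n lam s)"
  proof -
    have sh: "distr (Pi\<^sub>M {1..m} (\<lambda>_. lborel)) (Pi\<^sub>M (Suc ` {1..m}) (\<lambda>_. lborel)) T = Pi\<^sub>M (Suc ` {1..m}) (\<lambda>_. lborel :: real measure)"
      unfolding T_def by (rule PiM_shift) simp
    show ?thesis unfolding sh set_lebesgue_integral_def J ..
  qed
  also have "\<dots> = integral\<^sup>L (Pi\<^sub>M {1..m} (\<lambda>_. lborel)) (\<lambda>s. indicator (pinned_set n) (T s) *\<^sub>R pinned_integrand \<sigma>2 \<mu> n lam (T s))"
    by (rule integral_distr[OF Tm Fm])
  also have "\<dots> = integral\<^sup>L (Pi\<^sub>M {1..m} (\<lambda>_. lborel)) (\<lambda>s. indicator (sel_simplex m) s *\<^sub>R selberg_integrand \<sigma>2 \<mu> m lam (2*lam) (2*lam) s)"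
  proof (rule Bochner_Integration.integral_cong[OF refl])
    fix s :: "nat \<Rightarrow> real"
    have "indicator (pinned_set (m+2)) (T s) * pinned_integrand \<sigma>2 \<mu> (m+2) lam (T s)
       = indicator (sel_simplex m) s * selberg_integrand \<sigma>2 \<mu> m lam (2*lam) (2*lam) s"
      by (rule shift_point[OF m(1)]) (auto simp: T_def image_iff intro: bexI[where x="_ - 1"])
    then show "indicator (pinned_set n) (T s) *\<^sub>R pinned_integrand \<sigma>2 \<mu> n lam (T s)
        = indicator (sel_simplex m) s *\<^sub>R selberg_integrand \<sigma>2 \<mu> m lam (2*lam) (2*lam) s"
      using m by simp
  qed
  also have "\<dots> = selbergS \<sigma>2 \<mu> (n-2) lam (2*lam) (2*lam)"
    unfolding selbergS_def set_lebesgue_integral_def m_def[symmetric] using m(1) by simp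
  finally show ?thesis .
qed



lemma set_int_as_nn:
  fixes f :: "(nat \<Rightarrow> real) \<Rightarrow> real"
  assumes "set_integrable M A f" and "\<And>x. 0 \<le> f x"
  shows "(\<integral>\<^sup>+ x. ennreal (indicator A x * f x) \<partial>M) = ennreal (set_lebesgue_integral M A f)"
    and "0 \<le> set_lebesgue_integral M A f"
proof -
  have i: "integrable M (\<lambda>x. indicator A x * f x)"
    using assms(1) by (simp add: set_integrable_def)
  show "(\<integral>\<^sup>+ x. ennreal (indicator A x * f x) \<partial>M) = ennreal (set_lebesgue_integral M A f)"
    unfolding set_lebesgue_integral_def using assms(2)
    by (simp add: nn_integral_eq_integral[OF i])
  show "0 \<le> set_lebesgue_integral M A f"
    unfolding set_lebesgue_integral_def using assms(2) by (simp add: integral_nonneg_AE)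
qed

theorem theorem3:
  fixes \<sigma>2 :: real and M :: "real \<Rightarrow> real" and \<mu> :: "real measure"
    and lam :: real and n :: nat
  assumes sigma_nonneg: "\<sigma>2 \<ge> 0"
    and M_mono_neg: "mono_on {..<0} M" and M_mono_pos: "mono_on {0<..} M"
    and M_cont_neg: "continuous_on {..<0} M" and M_cont_pos: "continuous_on {0<..} M"
    and M_top: "(M \<longlongrightarrow> 0) at_top" and M_bot: "(M \<longlongrightarrow> 0) at_bot"
    and mu_sets: "sets \<mu> = sets borel"
    and mu_pos: "\<And>a b. 0 < a \<Longrightarrow> a \<le> b \<Longrightarrow> emeasure \<mu> {a<..b} = ennreal (M b - M a)"
    and mu_neg: "\<And>a b. b < 0 \<Longrightarrow> a \<le> b \<Longrightarrow> emeasure \<mu> {a<..b} = ennreal (M b - M a)"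
    and small_jumps: "set_integrable \<mu> ({-1..1} - {0}) (\<lambda>u. u ^ 2)"
    and d_conv: "\<And>m::nat. m \<ge> 1 \<Longrightarrow>
          set_integrable \<mu> (- {0}) (\<lambda>u. exp ((real m - 1) * u) * (exp u - 1)^2)"
    and phi_conv: "\<And>k::nat. k \<ge> 1 \<Longrightarrow>
          set_integrable \<mu> (- {0}) (\<lambda>u. exp (real k * u) - 1 - real k * (exp u - 1))"
    and n_ge: "n \<ge> 2"
    and conv_S: "set_integrable (Pi\<^sub>M {1..n} (\<lambda>_. lborel)) (sel_simplex n)
                   (selberg_integrand \<sigma>2 \<mu> n lam 0 0)"
    and conv_pinned: "set_integrable (Pi\<^sub>M {2..n-1} (\<lambda>_. lborel)) (pinned_set n)
                   (pinned_integrand \<sigma>2 \<mu> n lam)"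
    and conv_S2: "set_integrable (Pi\<^sub>M {1..n-2} (\<lambda>_. lborel)) (sel_simplex (n-2))
                   (selberg_integrand \<sigma>2 \<mu> (n-2) lam (2*lam) (2*lam))"
  shows "selbergS \<sigma>2 \<mu> n lam 0 0 =
           set_lebesgue_integral (Pi\<^sub>M {2..n-1} (\<lambda>_. lborel)) (pinned_set n)
              (pinned_integrand \<sigma>2 \<mu> n lam)
           / ((real n - 1 + 2 * lam * phi_in \<sigma>2 \<mu> n) * (real n + 2 * lam * phi_in \<sigma>2 \<mu> n))
       \<and> selbergS \<sigma>2 \<mu> n lam 0 0 =
           selbergS \<sigma>2 \<mu> (n-2) lam (2*lam) (2*lam)
           / ((real n - 1 + 2 * lam * phi_in \<sigma>2 \<mu> n) * (real n + 2 * lam * phi_in \<sigma>2 \<mu> n))"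
proof -
  let ?phi = "phi_in \<sigma>2 \<mu> n"
  define E where "E = (\<Sum>p\<in>{1..n}. \<Sum>k\<in>{1..<p}. 2 * lam * dd \<sigma>2 \<mu> (p - k))"
  have E: "E = 2 * lam * ?phi"
    unfolding E_def using phi_sum[OF d_conv phi_conv, of n \<sigma>2] n_ge
    by (simp add: sum_distrib_left[symmetric] mult.assoc)
  define S where "S = selbergS \<sigma>2 \<mu> n lam 0 0"
  define Q where "Q = set_lebesgue_integral (Pi\<^sub>M {2..n-1} (\<lambda>_. lborel)) (pinned_set n) (pinned_integrand \<sigma>2 \<mu> n lam)"
  have S_def': "S = set_lebesgue_integral (Pi\<^sub>M {1..n} (\<lambda>_. lborel)) (sel_simplex n) (selberg_integrand \<sigma>2 \<mu> n lam 0 0)"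
    using n_ge by (simp add: S_def selbergS_def)
  have NS: "(\<integral>\<^sup>+ t. ennreal (indicator (sel_simplex n) t * selberg_integrand \<sigma>2 \<mu> n lam 0 0 t) \<partial>Pi\<^sub>M {1..n} (\<lambda>_. lborel)) = ennreal S"
    and S0: "0 \<le> S"
    unfolding S_def' using set_int_as_nn[OF conv_S selberg_nonneg] by auto
  have NQ: "(\<integral>\<^sup>+ s. ennreal (indicator (pinned_set n) s * pinned_integrand \<sigma>2 \<mu> n lam s) \<partial>Pi\<^sub>M {2..n-1} (\<lambda>_. lborel)) = ennreal Q"
    and Q0: "0 \<le> Q"
    unfolding Q_def using set_int_as_nn[OF conv_pinned pinned_nonneg] by auto
  have key: "ennreal S = ennreal Q * KK (real n - 2 + E)"
    using main1[OF n_ge, of \<sigma>2 \<mu> lam] unfolding NS NQ E_def .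
  have Q2: "Q = selbergS \<sigma>2 \<mu> (n-2) lam (2*lam) (2*lam)"
    unfolding Q_def by (rule second[OF n_ge])
  define den where "den = (real n - 1 + 2 * lam * ?phi) * (real n + 2 * lam * ?phi)"
  have first: "S = Q / den"
  proof (cases "Q = 0")
    case True
    then have "ennreal S = 0" using key by simp
    then have "S = 0" using S0 by simp
    then show ?thesis using True by simp
  next
    case False
    then have Qp: "Q > 0" using Q0 by simp
    have "KK (real n - 2 + E) \<noteq> \<infinity>"
    proof
      assume "KK (real n - 2 + E) = \<infinity>"
      then have "ennreal S = \<infinity>" using key Qp by (simp add: ennreal_mult_top)
      then show False by simp
    qed
    then have ge: "real n - 2 + E > -1" using KK_infinite[of "real n - 2 + E"] by (meson not_le)
    then have "KK (real n - 2 + E) = ennreal (1 / ((real n - 2 + E + 1) * (real n - 2 + E + 2)))"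
      by (rule KK_formula)
    also have "(real n - 2 + E + 1) * (real n - 2 + E + 2) = den"
      unfolding den_def E by simp
    finally have "ennreal S = ennreal (Q * (1 / den))"
      using key ennreal_mult'[OF Q0, of "1/den"] by simp
    moreover have "den > 0" using ge unfolding den_def E by (intro mult_pos_pos) auto
    ultimately show ?thesis using S0 Q0 by simp
  qed
  show ?thesis
    using first Q2 unfolding S_def Q_def den_def by simp
qed


end
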